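(* For all even integers $n\ge2$ and real numbers $a\ge1$, $x\in(0,\pi)$, we have $S_{n,a}(x)\ge 2\sin(x)(1+\cos(x))$. Equality holds if and only if $n=2$, $a=1$ (any $x$), or $n=4$, $a=1$, $x=\pi/2$.
   Context: For a real number $a$ and integers $0\le m$, $\binom{m+a}{m}=\frac{(a+1)(a+2)\cdots(a+m)}{m!}$ (equal to $1$ when $m=0$). For an integer $n\ge1$, $S_{n,a}(x)=\sum_{j=1}^n\binom{n+a-j}{n-j}\sin(jx)$. *)

theory Defs
  imports "HOL-Analysis.Analysis"
begin

text \<open>binom_shift m a = binom(m+a, m) = (a+1)(a+2)...(a+m)/m!\<close>
definition binom_shift :: "nat \<Rightarrow> real \<Rightarrow> real" where
  "binom_shift m a = (\<Prod>i=1..m. a + real i) / fact m"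

definition S :: "nat \<Rightarrow> real \<Rightarrow> real \<Rightarrow> real" where
  "S n a x = (\<Sum>j=1..n. binom_shift (n - j) a * sin (real j * x))"

end

theory Submission
  imports Defs "HOL-Computational_Algebra.Formal_Power_Series"
begin

lemma bs_poch: "binom_shift m a = pochhammer (a+1) m / fact m"
proof (induction m)
  case 0 then show ?case by (simp add: binom_shift_def)
next
  case (Suc m)
  have "(\<Prod>i=1..Suc m. a + real i) = (\<Prod>i=1..m. a + real i) * (a + real (Suc m))"
    by (simp add: prod.nat_ivl_Suc' mult.commute)
  moreover have "(\<Prod>i=1..m. a + real i) = pochhammer (a+1) m"
    using Suc by (simp add: binom_shift_def)
  ultimately show ?case by (simp add: binom_shift_def pochhammer_Suc algebra_simps)
qed

lemma bs0 [simp]: "binom_shift 0 a = 1" by (simp add: binom_shift_def)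

lemma bs_pascal: "binom_shift (Suc k) a = binom_shift k a + binom_shift (Suc k) (a-1)"
proof -
  define P where "P = pochhammer (a+1) k"
  have F: "fact (Suc k) = (real k + 1) * fact k" by simp
  have F0: "(fact k :: real) > 0" by simp
  have e1: "binom_shift (Suc k) (a-1) = a * P / ((real k + 1) * fact k)"
    unfolding bs_poch P_def F by (simp add: pochhammer_rec)
  have e2: "binom_shift (Suc k) a = P * (a + 1 + real k) / ((real k + 1) * fact k)"
    unfolding bs_poch P_def F by (simp add: pochhammer_Suc)
  have e3: "binom_shift k a = P / fact k" unfolding bs_poch P_def by simp
  have e3': "P / fact k = P * (real k + 1) / ((real k + 1) * fact k)" by simp
  have "P * (real k + 1) / ((real k + 1) * fact k) + a * P / ((real k + 1) * fact k)
      = (P * (real k + 1) + a * P) / ((real k + 1) * fact k)" by (simp add: add_divide_distrib)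
  also have "P * (real k + 1) + a * P = P * (a + 1 + real k)" by (simp add: algebra_simps)
  finally show ?thesis unfolding e1 e2 e3 e3' by simp
qed

lemma mult_1mX_nth:
  fixes A :: "real fps"
  shows "fps_nth (A * (1 - fps_X)) n = fps_nth A n - (if n = 0 then 0 else fps_nth A (n-1))"
proof -
  have "A * (1 - fps_X) = A - fps_X * A" by (simp add: algebra_simps)
  then show ?thesis by simp
qed

definition H :: "real \<Rightarrow> real fps" where "H a = Abs_fps (\<lambda>k. binom_shift k a)"
definition W :: "real fps" where "W = Abs_fps (\<lambda>k. real k + 1)"
definition Sn :: "real \<Rightarrow> real fps" where "Sn x = Abs_fps (\<lambda>j. sin (real j * x))"

lemma H_step: "H a * (1 - fps_X) = H (a - 1)"
proof (rule fps_ext)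
  fix n show "fps_nth (H a * (1 - fps_X)) n = fps_nth (H (a - 1)) n"
  proof (cases n)
    case (Suc k) then show ?thesis using bs_pascal[of k a] by (simp add: mult_1mX_nth H_def)
  qed (simp add: mult_1mX_nth H_def)
qed

lemma W_inv: "W * (1 - fps_X) * (1 - fps_X) = 1"
proof -
  have "W * (1 - fps_X) = Abs_fps (\<lambda>_. 1)"
    by (rule fps_ext) (simp add: mult_1mX_nth W_def)
  moreover have "Abs_fps (\<lambda>_. 1::real) * (1 - fps_X) = 1"
    by (rule fps_ext) (simp add: mult_1mX_nth)
  ultimately show ?thesis by simp
qed

lemma H_W: "H (a - 2) * W = H a"
proof -
  have "H (a - 2) = H a * (1 - fps_X) * (1 - fps_X)"
    by (simp add: H_step)
  then have "H (a - 2) * W = H a * (W * (1 - fps_X) * (1 - fps_X))"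
    by (simp only: ac_simps)
  then show ?thesis by (simp add: W_inv)
qed


definition Dq :: "nat \<Rightarrow> real \<Rightarrow> real" where
  "Dq q x = (\<Sum>i=0..q. sin (real (q - i) * x))"
definition Fq :: "nat \<Rightarrow> real \<Rightarrow> real" where
  "Fq q x = (\<Sum>i=0..q. (real i + 1) * sin (real (q - i) * x))"

lemma two_cos_sin: "2 * cos x * sin ((real q + 1) * x) = sin ((real q + 2) * x) + sin (real q * x)"
proof -
  have "sin ((real q + 2) * x) = sin ((real q + 1) * x + x)" by (simp add: algebra_simps)
  moreover have "sin (real q * x) = sin ((real q + 1) * x - x)" by (simp add: algebra_simps)
  ultimately show ?thesis by (simp add: sin_add sin_diff)
qed

lemma Dq_closed: "2 * (1 - cos x) * Dq q x = sin x + sin (real q * x) - sin ((real q + 1) * x)"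
proof (induction q)
  case 0 then show ?case by (simp add: Dq_def)
next
  case (Suc q)
  have "Dq (Suc q) x = sin ((real q + 1) * x) + Dq q x"
    unfolding Dq_def by (subst sum.atLeast0_atMost_Suc_shift) (simp add: add_ac)
  then have "2 * (1 - cos x) * Dq (Suc q) x = 2 * sin ((real q + 1) * x) - 2 * cos x * sin ((real q + 1) * x) + 2 * (1 - cos x) * Dq q x"
    by (simp add: algebra_simps)
  also have "\<dots> = sin x + sin ((real q + 1) * x) - sin ((real q + 2) * x)"
    using Suc two_cos_sin[of x q] by simp
  finally show ?case by (simp add: add_ac)
qed

lemma Fq_closed: "2 * (1 - cos x) * Fq q x = (real q + 1) * sin x - sin ((real q + 1) * x)"
proof (induction q)
  case 0 then show ?case by (simp add: Fq_def)
next
  case (Suc q)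
  have "Fq (Suc q) x = sin ((real q + 1) * x) + Fq q x + Dq q x"
    unfolding Fq_def Dq_def by (subst sum.atLeast0_atMost_Suc_shift) (simp add: algebra_simps sum.distrib sum_distrib_left)
  then have "2 * (1 - cos x) * Fq (Suc q) x = 2 * sin ((real q + 1) * x) - 2 * cos x * sin ((real q + 1) * x) + 2 * (1 - cos x) * Fq q x + 2 * (1 - cos x) * Dq q x"
    by (simp add: algebra_simps)
  also have "\<dots> = (real q + 2) * sin x - sin ((real q + 2) * x)"
    using Suc Dq_closed[of x q] two_cos_sin[of x q] by (simp add: algebra_simps)
  finally show ?case by (simp add: add_ac)
qed

lemma abs_sin_le: "\<bar>sin (real m * x)\<bar> \<le> real m * \<bar>sin x\<bar>"
proof (induction m)
  case 0 then show ?case by simp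
next
  case (Suc m)
  have "sin (real (Suc m) * x) = sin (real m * x) * cos x + cos (real m * x) * sin x"
    by (simp add: distrib_right sin_add)
  moreover have "\<bar>sin (real m * x) * cos x + cos (real m * x) * sin x\<bar> \<le> \<bar>sin (real m * x) * cos x\<bar> + \<bar>cos (real m * x) * sin x\<bar>"
    by (rule abs_triangle_ineq)
  ultimately have "\<bar>sin (real (Suc m) * x)\<bar> \<le> \<bar>sin (real m * x)\<bar> * \<bar>cos x\<bar> + \<bar>cos (real m * x)\<bar> * \<bar>sin x\<bar>"
    by (simp only: abs_mult)
  also have "\<dots> \<le> \<bar>sin (real m * x)\<bar> * 1 + 1 * \<bar>sin x\<bar>"
    by (intro add_mono mult_left_mono mult_right_mono) auto
  finally show ?case using Suc by (simp add: algebra_simps)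
qed

lemma abs_sin_less:
  assumes "0 < x" "x < pi" "m \<ge> 2"
  shows "\<bar>sin (real m * x)\<bar> < real m * sin x"
proof -
  obtain k where k: "m = Suc k" "k \<ge> 1" using assms(3) by (cases m) auto
  have sx: "sin x > 0" using assms sin_gt_zero by auto
  have cx: "\<bar>cos x\<bar> < 1"
  proof -
    have "cos x < 1" using assms cos_monotone_0_pi[of 0 x] by simp
    moreover have "cos x > -1" using assms cos_monotone_0_pi[of x pi] by simp
    ultimately show ?thesis by simp
  qed
  have e: "sin (real m * x) = sin (real k * x) * cos x + cos (real k * x) * sin x"
    using k by (simp add: distrib_right sin_add)
  have b1: "\<bar>sin (real k * x)\<bar> \<le> real k * sin x" using abs_sin_le[of k x] sx by simp
  have b2: "\<bar>cos (real k * x) * sin x\<bar> \<le> sin x" using sx by (simp add: abs_mult mult_left_le_one_le)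
  show ?thesis
  proof (cases "sin (real k * x) = 0")
    case True
    then have "\<bar>sin (real m * x)\<bar> \<le> sin x" using e b2 by simp
    also have "\<dots> < real m * sin x" using sx k by simp
    finally show ?thesis .
  next
    case False
    then have "\<bar>sin (real k * x) * cos x\<bar> < \<bar>sin (real k * x)\<bar>"
      using cx by (simp add: abs_mult)
    moreover have "\<bar>sin (real m * x)\<bar> \<le> \<bar>sin (real k * x) * cos x\<bar> + \<bar>cos (real k * x) * sin x\<bar>"
      unfolding e by (rule abs_triangle_ineq)
    ultimately have "\<bar>sin (real m * x)\<bar> < \<bar>sin (real k * x)\<bar> + sin x"
      using b2 by linarith
    then show ?thesis using b1 k by (simp add: algebra_simps)
  qed
qed


lemma S_rep: "S n a x = fps_nth (H a * Sn x) n"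
proof -
  have "fps_nth (H a * Sn x) n = (\<Sum>i=0..n. binom_shift i a * sin (real (n - i) * x))"
    by (simp add: fps_mult_nth H_def Sn_def)
  also have "\<dots> = (\<Sum>i\<in>{0..<n}. binom_shift i a * sin (real (n - i) * x))"
  proof -
    have "{0..n} = insert n {0..<n}" by auto
    then show ?thesis by simp
  qed
  also have "\<dots> = (\<Sum>j=1..n. binom_shift (n - j) a * sin (real j * x))"
    by (rule sum.reindex_bij_witness[of _ "\<lambda>j. n - j" "\<lambda>i. n - i"]) auto
  finally show ?thesis by (simp add: S_def)
qed

lemma S_F: "S n a x = (\<Sum>i=0..n. binom_shift i (a - 2) * Fq (n - i) x)"
proof -
  have "S n a x = fps_nth (H (a - 2) * (W * Sn x)) n"
    unfolding S_rep by (subst H_W[symmetric]) (simp only: mult.assoc)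
  moreover have Q: "fps_nth (W * Sn x) q = Fq q x" for q
    by (simp add: fps_mult_nth W_def Sn_def Fq_def)
  moreover have "fps_nth (H (a - 2) * (W * Sn x)) n = (\<Sum>i=0..n. binom_shift i (a - 2) * Fq (n - i) x)"
    unfolding fps_mult_nth[of "H (a - 2)"] Q by (simp add: H_def)
  ultimately show ?thesis by simp
qed

lemma e_nonneg: "a \<ge> 1 \<Longrightarrow> binom_shift i (a - 2) \<ge> 0"
  unfolding binom_shift_def by (intro divide_nonneg_pos prod_nonneg) auto

lemma e_pos: "a > 1 \<Longrightarrow> binom_shift i (a - 2) > 0"
  unfolding binom_shift_def by (intro divide_pos_pos prod_pos) auto

lemma e_zero: "i \<ge> 1 \<Longrightarrow> binom_shift i (- 1) = 0"
proof -
  assume "i \<ge> 1"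
  then have "(\<Prod>t=1..i. (- 1) + real t) = 0" by (intro prod_zero bexI[of _ 1]) auto
  then show ?thesis unfolding binom_shift_def by simp
qed

lemma K_pos: "0 < x \<Longrightarrow> x < pi \<Longrightarrow> 2 * (1 - cos x) > 0"
  using cos_monotone_0_pi[of 0 x] by simp

lemma Fq_pos: assumes "0 < x" "x < pi" "q \<ge> 1" shows "Fq q x > 0"
proof -
  have "\<bar>sin (real (q+1) * x)\<bar> < real (q+1) * sin x"
    by (rule abs_sin_less) (use assms in auto)
  moreover have "real (q+1) = real q + 1" by simp
  ultimately have "(real q + 1) * sin x - sin ((real q + 1) * x) > 0"
    by (metis abs_ge_self diff_gt_0_iff_gt order_le_less_trans)
  then have "2 * (1 - cos x) * Fq q x > 0" unfolding Fq_closed .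
  then show ?thesis using K_pos[OF assms(1,2)] by (simp add: zero_less_mult_iff)
qed

lemma Fq_nonneg: assumes "0 < x" "x < pi" shows "Fq q x \<ge> 0"
proof (cases "q = 0")
  case True then show ?thesis by (simp add: Fq_def)
next
  case False then show ?thesis using Fq_pos[OF assms, of q] by simp
qed

lemma Fq2: "Fq 2 x = 2 * sin x * (1 + cos x)"
proof -
  have "Fq 2 x = sin (2 * x) + 2 * sin x"
    by (simp add: Fq_def numeral_2_eq_2)
  then show ?thesis unfolding sin_double by (simp add: algebra_simps)
qed

lemma sin_diff_id: "sin ((2 * real m + 3) * x) - sin (3 * x) = 2 * cos ((real m + 3) * x) * sin (real m * x)"
proof -
  have "sin ((2 * real m + 3) * x) = sin ((real m + 3) * x + real m * x)" by (simp add: algebra_simps)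
  moreover have "sin (3 * x) = sin ((real m + 3) * x - real m * x)" by (simp add: algebra_simps)
  ultimately show ?thesis by (simp add: sin_add sin_diff)
qed

lemma Fq_cmp:
  assumes "0 < x" "x < pi"
  shows "Fq (2 * m + 2) x \<ge> Fq 2 x \<and> (Fq (2 * m + 2) x = Fq 2 x \<longleftrightarrow> m = 0 \<or> (m = 1 \<and> x = pi / 2))"
proof -
  define K where "K = 2 * (1 - cos x)"
  have K: "K > 0" using K_pos[OF assms] by (simp add: K_def)
  have sx: "sin x > 0" using assms sin_gt_zero by auto
  have "K * (Fq (2 * m + 2) x - Fq 2 x) = (2 * real m + 3) * sin x - sin ((2 * real m + 3) * x) - (3 * sin x - sin (3 * x))"
  proof -
    have 1: "K * Fq (2 * m + 2) x = (2 * real m + 3) * sin x - sin ((2 * real m + 3) * x)"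
      unfolding K_def Fq_closed by (simp add: algebra_simps)
    have 2: "K * Fq 2 x = 3 * sin x - sin (3 * x)"
      unfolding K_def Fq_closed by (simp add: algebra_simps)
    show ?thesis unfolding right_diff_distrib 1 2 ..
  qed
  also have "\<dots> = 2 * (real m * sin x - cos ((real m + 3) * x) * sin (real m * x))"
    using sin_diff_id[of m x] by (simp add: algebra_simps)
  finally have E: "K * (Fq (2 * m + 2) x - Fq 2 x) = 2 * (real m * sin x - cos ((real m + 3) * x) * sin (real m * x))" .
  have b: "cos ((real m + 3) * x) * sin (real m * x) \<le> \<bar>sin (real m * x)\<bar>"
  proof -
    have "\<bar>cos ((real m + 3) * x)\<bar> * \<bar>sin (real m * x)\<bar> \<le> \<bar>sin (real m * x)\<bar>"
      by (rule mult_left_le_one_le) (auto simp: abs_cos_le_one)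
    then show ?thesis by (metis abs_ge_self abs_mult order_trans)
  qed
  have b2: "\<bar>sin (real m * x)\<bar> \<le> real m * sin x" using abs_sin_le[of m x] sx by simp
  have ge: "K * (Fq (2 * m + 2) x - Fq 2 x) \<ge> 0" using E b b2 by simp
  then have G: "Fq (2 * m + 2) x \<ge> Fq 2 x" using K by (simp add: zero_le_mult_iff)
  have eqiff: "Fq (2 * m + 2) x = Fq 2 x \<longleftrightarrow> real m * sin x = cos ((real m + 3) * x) * sin (real m * x)"
    using E K by auto
  have "real m * sin x = cos ((real m + 3) * x) * sin (real m * x) \<longleftrightarrow> m = 0 \<or> (m = 1 \<and> x = pi / 2)"
  proof (cases "m \<ge> 2")
    case True
    then have "\<bar>sin (real m * x)\<bar> < real m * sin x" using abs_sin_less assms by blast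
    then show ?thesis using b True by auto
  next
    case False
    then consider "m = 0" | "m = 1" by linarith
    then show ?thesis
    proof cases
      case 1 then show ?thesis by simp
    next
      case 2
      have "(sin x = cos (4 * x) * sin x) \<longleftrightarrow> cos (4 * x) = 1" using sx
        by (metis mult_cancel_right2 order_less_irrefl)
      also have "\<dots> \<longleftrightarrow> x = pi / 2"
      proof
        assume "cos (4 * x) = 1"
        then obtain k :: int where k: "4 * x = k * 2 * pi" by (auto simp: cos_one_2pi_int)
        have h: "real_of_int k * pi = 2 * x" using k by (simp add: algebra_simps)
        have "real_of_int k * pi > 0" using h assms by simp
        then have "real_of_int k > 0" using pi_gt_zero by (simp add: zero_less_mult_iff)
        moreover have "real_of_int k * pi < 2 * pi" using h assms by simp
        then have "real_of_int k < 2" using pi_gt_zero by simp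
        ultimately have "k = 1" by linarith
        then show "x = pi / 2" using k by simp
      next
        assume "x = pi / 2"
        then have "4 * x = 2 * pi" by simp
        then show "cos (4 * x) = 1" by (metis cos_two_pi)
      qed
      finally show ?thesis using 2 by (simp add: add_ac)
    qed
  qed
  then show ?thesis using G eqiff by simp
qed

theorem theorem3p2:
  fixes n :: nat and a x :: real
  assumes "even n" and "n \<ge> 2" and "a \<ge> 1" and "0 < x" and "x < pi"
  shows "S n a x \<ge> 2 * sin x * (1 + cos x)
         \<and> (S n a x = 2 * sin x * (1 + cos x) \<longleftrightarrow>
              (n = 2 \<and> a = 1) \<or> (n = 4 \<and> a = 1 \<and> x = pi / 2))"
proof -
  obtain k where k: "n = 2 * k" using assms(1) by (auto elim: evenE)
  define m where "m = k - 1"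
  have m: "n = 2 * m + 2" using k assms(2) unfolding m_def by simp
  define R where "R = (\<Sum>i=1..n. binom_shift i (a - 2) * Fq (n - i) x)"
  have SR: "S n a x = Fq n x + R"
    unfolding S_F R_def by (simp add: sum.atLeast_Suc_atMost)
  have R0: "R \<ge> 0" unfolding R_def
    by (intro sum_nonneg mult_nonneg_nonneg e_nonneg Fq_nonneg) (use assms in auto)
  have Rpos: "R > 0" if "a > 1"
  proof -
    have "binom_shift 1 (a - 2) * Fq (n - 1) x > 0"
      by (intro mult_pos_pos e_pos Fq_pos) (use assms that in auto)
    also have "\<dots> \<le> R" unfolding R_def
      by (rule member_le_sum[where f = "\<lambda>i. binom_shift i (a - 2) * Fq (n - i) x"])
         (use assms in \<open>auto intro!: mult_nonneg_nonneg e_nonneg Fq_nonneg\<close>)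
    finally show ?thesis .
  qed
  have Rz: "R = 0" if "a = 1"
    unfolding R_def using that by (intro sum.neutral) (auto simp: e_zero)
  have C: "Fq n x \<ge> Fq 2 x \<and> (Fq n x = Fq 2 x \<longleftrightarrow> m = 0 \<or> (m = 1 \<and> x = pi / 2))"
    unfolding m by (rule Fq_cmp) (use assms in auto)
  have T: "2 * sin x * (1 + cos x) = Fq 2 x" by (simp add: Fq2)
  have nm: "(n = 2) = (m = 0)" "(n = 4) = (m = 1)" using m by auto
  show ?thesis
  proof (cases "a = 1")
    case True
    then have SS: "S n a x = Fq n x" using SR Rz by simp
    show ?thesis unfolding SS T nm using C True by simp
  next
    case False
    then have "R > 0" using Rpos assms(3) by simp
    then have "S n a x > 2 * sin x * (1 + cos x)" unfolding SR T using C by linarith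
    then show ?thesis using False by auto
  qed
qed

end
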